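(* Fix $B>1$ and $H>0$, and let $$x(s)=\frac1H\sqrt{1+B^2+2B\sin\!\big(Hs+\tfrac{3\pi}{2}\big)},\qquad z(s)=\int_{3\pi/(2H)}^{\,s+3\pi/(2H)}\frac{1+B\sin(Ht)}{\sqrt{1+B^2+2B\sin(Ht)}}\,dt ,$$ $g(s)=x(s)-\frac{x'(s)}{z'(s)}z(s)$, all considered on $I_0=(-r_0,r_0)$, where $r_0$ is the smallest positive value with $z'(r_0)=0$. Then there exists $\bar r\in(0,r_0)$ with $g(\bar r)=g(-\bar r)=0$, and for all $r\in[-\bar r,\bar r]$ we have $g(r)\ge0$, $x''(r)>0$ and $x'(r)z(r)\le0$. In particular, with $R_0^2=x(\bar r)^2+z(\bar r)^2$, the surface $\Sigma$ obtained by rotating $\beta|_{[-\bar r,\bar r]}$, $\beta=(x,0,z)$, about the $z$-axis is a free boundary CMC surface in the ball $\mathbb B^3_{R_0}$ of radius $R_0$ centered at the origin and satisfies at every point $$|\Phi|^2\langle\vec x,N\rangle^2\le\tfrac12\big(2+H_\Sigma\langle\vec x,N\rangle\big)^2,$$ where $N=(-z'\cos\theta,-z'\sin\theta,x')$ at $(x(s)\cos\theta,x(s)\sin\theta,z(s))$ and $H_\Sigma$ is the (constant) mean curvature of $\Sigma$ with respect to $N$.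
   Context: For $B>1$, rotating $\beta$ about the $z$-axis gives a Delaunay nodoid (an immersed surface of revolution of constant mean curvature); $\beta$ is parametrized by arc length. Free boundary in a ball $\mathbb B^3_{R}$: interior in the open ball, boundary on the sphere of radius $R$, meeting it orthogonally. Conventions: shape operator $A$ w.r.t. $N$ defined by $\langle A(Y),Z\rangle=\langle\bar\nabla_YZ,N\rangle$; mean curvature $=\operatorname{tr}A$ (unnormalized); $\Phi=\Pi-\frac{H_\Sigma}2g_\Sigma$, $|\Phi|^2=|A|^2-H_\Sigma^2/2$; $\vec x$ the position vector. *)

theory Defs
  imports "HOL-Analysis.Analysis"
begin

definition oint :: "real \<Rightarrow> real \<Rightarrow> (real \<Rightarrow> real) \<Rightarrow> real" where
  "oint a b f = (if a \<le> b then integral {a..b} f else - integral {b..a} f)"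

definition d_s :: "(real \<Rightarrow> real \<Rightarrow> real^3) \<Rightarrow> real \<Rightarrow> real \<Rightarrow> real^3" where
  "d_s Y s t = vector_derivative (\<lambda>u. Y u t) (at s)"

definition d_t :: "(real \<Rightarrow> real \<Rightarrow> real^3) \<Rightarrow> real \<Rightarrow> real \<Rightarrow> real^3" where
  "d_t Y s t = vector_derivative (\<lambda>u. Y s u) (at t)"

definition fE where "fE X s t = d_s X s t \<bullet> d_s X s t"
definition fF where "fF X s t = d_s X s t \<bullet> d_t X s t"
definition fG where "fG X s t = d_t X s t \<bullet> d_t X s t"

text \<open>Second fundamental form w.r.t. normal Nv, convention II(Y,Z) = <D_Y Z, N>.\<close>
definition sL where "sL X Nv s t = d_s (d_s X) s t \<bullet> Nv s t"
definition sM where "sM X Nv s t = d_t (d_s X) s t \<bullet> Nv s t"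
definition sN where "sN X Nv s t = d_t (d_t X) s t \<bullet> Nv s t"

text \<open>Shape operator matrix S = I^{-1} II (entries).\<close>
definition shape :: "(real \<Rightarrow> real \<Rightarrow> real^3) \<Rightarrow> (real \<Rightarrow> real \<Rightarrow> real^3) \<Rightarrow> real \<Rightarrow> real \<Rightarrow> real \<times> real \<times> real \<times> real" where
  "shape X Nv s t =
     (let E = fE X s t; F = fF X s t; G = fG X s t;
          L = sL X Nv s t; M = sM X Nv s t; N = sN X Nv s t;
          D = E * G - F\<^sup>2
      in ((G * L - F * M) / D, (G * M - F * N) / D,
          (E * M - F * L) / D, (E * N - F * M) / D))"

text \<open>Unnormalized mean curvature = trace of the shape operator.\<close>
definition mean_curv where
  "mean_curv X Nv s t = (case shape X Nv s t of (a, b, c, d) \<Rightarrow> a + d)"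

text \<open>|A|^2 = trace(S^2).\<close>
definition normA2 where
  "normA2 X Nv s t = (case shape X Nv s t of (a, b, c, d) \<Rightarrow> a\<^sup>2 + 2 * b * c + d\<^sup>2)"

definition normPhi2 where
  "normPhi2 X Nv s t = normA2 X Nv s t - (mean_curv X Nv s t)\<^sup>2 / 2"

definition free_boundary_CMC_in_ball ::
  "(real \<Rightarrow> real \<Rightarrow> real^3) \<Rightarrow> (real \<Rightarrow> real \<Rightarrow> real^3) \<Rightarrow> real \<Rightarrow> real \<Rightarrow> real \<Rightarrow> bool" where
  "free_boundary_CMC_in_ball X Nv a b R \<longleftrightarrow>
     a < b \<and> 0 < R \<and>
     (\<forall>s\<in>{a..b}. \<forall>t.
        (\<lambda>u. X u t) differentiable (at s) \<and> (\<lambda>u. X s u) differentiable (at t) \<and>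
        (\<lambda>u. d_s X u t) differentiable (at s) \<and> (\<lambda>u. d_s X s u) differentiable (at t) \<and>
        (\<lambda>u. d_t X s u) differentiable (at t) \<and>
        fE X s t * fG X s t - (fF X s t)\<^sup>2 > 0 \<and>
        norm (Nv s t) = 1 \<and> Nv s t \<bullet> d_s X s t = 0 \<and> Nv s t \<bullet> d_t X s t = 0) \<and>
     (\<forall>s\<in>{a<..<b}. \<forall>t. norm (X s t) < R) \<and>
     (\<forall>s\<in>{a, b}. \<forall>t. norm (X s t) = R \<and> X s t \<bullet> Nv s t = 0) \<and>
     (\<exists>Hc. \<forall>s\<in>{a..b}. \<forall>t. mean_curv X Nv s t = Hc)"

end

theory Submission
  imports Defs
begin


lemma vec3_decomp: "(vector [a, b, c] :: real^3) = a *\<^sub>R vector [1,0,0] + b *\<^sub>R vector [0,1,0] + c *\<^sub>R vector [0,0,1]"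
  by (simp add: vec_eq_iff forall_3)

lemma vec3_deriv:
  assumes "(f has_real_derivative f') (at s)" "(g has_real_derivative g') (at s)" "(h has_real_derivative h') (at s)"
  shows "((\<lambda>u. vector [f u, g u, h u] :: real^3) has_vector_derivative vector [f', g', h']) (at s)"
proof -
  have "((\<lambda>u. f u *\<^sub>R (vector [1,0,0]::real^3) + g u *\<^sub>R vector [0,1,0] + h u *\<^sub>R vector [0,0,1]) has_vector_derivative
     (f s *\<^sub>R 0 + f' *\<^sub>R vector [1,0,0] + (g s *\<^sub>R 0 + g' *\<^sub>R vector [0,1,0]) + (h s *\<^sub>R 0 + h' *\<^sub>R vector [0,0,1]))) (at s)"
    by (intro derivative_intros assms)
  then show ?thesis by (simp add: vec3_decomp[symmetric])
qed

lemma inner3: "(vector [a, b, c] :: real^3) \<bullet> vector [d, e, f] = a*d + b*e + c*f"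
  by (simp add: inner_vec_def sum_3)

lemma norm3: "norm (vector [a, b, c] :: real^3) = sqrt (a^2 + b^2 + c^2)"
  by (simp add: norm_eq_sqrt_inner inner3 power2_eq_square)

lemma sin_shift: "sin (y + 3 * pi / 2) = - cos y"
proof -
  have e: "y + 3 * pi / 2 = (y + pi/2) + pi" by simp
  have "sin (y + 3 * pi / 2) = sin ((y + pi/2) + pi)" by (simp only: e)
  also have "\<dots> = - sin (y + pi/2)" by (rule sin_periodic_pi)
  also have "\<dots> = - cos y" by (simp add: sin_add)
  finally show ?thesis .
qed

definition QQ :: "real \<Rightarrow> real \<Rightarrow> real \<Rightarrow> real" where "QQ b h s = 1 + b^2 - 2 * b * cos(h * s)"

lemma QQ_ge: "B > 1 \<Longrightarrow> QQ B H s \<ge> (B - 1)^2"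
proof -
  assume "B > 1"
  have "cos (H * s) \<le> 1" by simp
  then show ?thesis unfolding QQ_def using \<open>B>1\<close> by (simp add: power2_eq_square algebra_simps)
qed

lemma QQ_pos: "B > 1 \<Longrightarrow> QQ B H s > 0"
  by (smt (verit) QQ_ge zero_less_power)

lemma QQ_deriv: "(QQ B H has_real_derivative 2 * B * H * sin(H * s)) (at s)"
  unfolding QQ_def[abs_def] by (auto intro!: derivative_eq_intros)

lemma sqrtQ_deriv: assumes "B > 1"
  shows "((\<lambda>s. sqrt (QQ B H s)) has_real_derivative (B * H * sin(H * s) / sqrt (QQ B H s))) (at s)"
proof -
  have q: "QQ B H s > 0" using QQ_pos assms by blast
  have "((\<lambda>s. sqrt (QQ B H s)) has_real_derivative (inverse (sqrt (QQ B H s)) / 2 * (2 * B * H * sin(H * s)))) (at s)"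
    by (rule DERIV_chain2[OF DERIV_real_sqrt[OF q] QQ_deriv])
  then show ?thesis by (simp add: field_simps)
qed

lemma x_deriv: assumes "B > 1" "H > 0"
  shows "((\<lambda>s. sqrt (QQ B H s) / H) has_real_derivative B * sin(H * s)/sqrt(QQ B H s)) (at s)"
proof -
  have "((\<lambda>s. sqrt (QQ B H s) / H) has_real_derivative (B * H * sin(H * s) / sqrt (QQ B H s)) / H) (at s)"
    by (rule DERIV_cdivide[OF sqrtQ_deriv[OF assms(1)]])
  moreover have "(B * H * sin(H * s) / sqrt (QQ B H s)) / H = B * sin(H * s)/sqrt(QQ B H s)"
    using assms by (simp add: field_simps)
  ultimately show ?thesis by simp
qed

lemma Bsin_deriv: "((\<lambda>s. B * sin(H * s)) has_real_derivative B * H * cos (H * s)) (at s)"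
  by (auto intro!: derivative_eq_intros)

lemma Bcos_deriv: "((\<lambda>s. 1 - B * cos(H * s)) has_real_derivative B * H * sin (H * s)) (at s)"
  by (auto intro!: derivative_eq_intros)

lemma xp_deriv: assumes "B > 1" "H > 0"
  shows "((\<lambda>s. B * sin(H * s)/sqrt(QQ B H s)) has_real_derivative
     B * H * (B * cos(H * s) - 1) * (B - cos(H * s))/(QQ B H s * sqrt (QQ B H s))) (at s)"
proof -
  have q: "QQ B H s > 0" using QQ_pos assms by blast
  define r where "r = sqrt (QQ B H s)"
  have r: "r > 0" "r^2 = QQ B H s" using q by (auto simp: r_def)
  have "((\<lambda>s. B * sin(H * s)/sqrt(QQ B H s)) has_real_derivative
     ((B * H * cos (H * s)) * r - (B * sin (H * s)) * (B * H * sin(H * s) / r)) / (r * r)) (at s)"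
    unfolding r_def by (rule DERIV_divide[OF Bsin_deriv sqrtQ_deriv[OF assms(1)]]) (use q in auto)
  moreover have "((B * H * cos (H * s)) * r - (B * sin (H * s)) * (B * H * sin(H * s) / r)) / (r * r)
     = B * H * (cos (H * s) * r^2 - B * (sin (H * s))^2) / (r^2 * r)"
    using r by (simp add: field_simps power2_eq_square)
  moreover have "cos (H * s) * r^2 - B * (sin (H * s))^2 = (B * cos(H * s) - 1) * (B - cos(H * s))"
    unfolding r QQ_def using sin_squared_eq[of "H * s"] by algebra
  ultimately show ?thesis unfolding r_def using r by (simp add: r_def ac_simps)
qed

lemma zp_deriv: assumes "B > 1" "H > 0"
  shows "((\<lambda>s. (1 - B * cos(H * s))/sqrt(QQ B H s)) has_real_derivative
     B^2 * H * sin(H * s) * (B - cos(H * s))/(QQ B H s * sqrt (QQ B H s))) (at s)"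
proof -
  have q: "QQ B H s > 0" using QQ_pos assms by blast
  define r where "r = sqrt (QQ B H s)"
  have r: "r > 0" "r^2 = QQ B H s" using q by (auto simp: r_def)
  have "((\<lambda>s. (1 - B * cos(H * s))/sqrt(QQ B H s)) has_real_derivative
     ((B * H * sin (H * s)) * r - (1 - B * cos (H * s)) * (B * H * sin(H * s) / r)) / (r * r)) (at s)"
    unfolding r_def by (rule DERIV_divide[OF Bcos_deriv sqrtQ_deriv[OF assms(1)]]) (use q in auto)
  moreover have "((B * H * sin (H * s)) * r - (1 - B * cos (H * s)) * (B * H * sin(H * s) / r)) / (r * r)
     = B * H * sin (H * s) * (r^2 - (1 - B * cos (H * s))) / (r^2 * r)"
    using r by (simp add: field_simps power2_eq_square)
  moreover have "r^2 - (1 - B * cos (H * s)) = B * (B - cos(H * s))"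
    unfolding r QQ_def by algebra
  ultimately show ?thesis unfolding r_def using r by (simp add: r_def power2_eq_square ac_simps)
qed

lemma oint_eq:
  assumes f: "continuous_on UNIV f" and m: "m \<le> a" "m \<le> y"
  shows "oint a y f = integral {m..y} f - integral {m..a} f"
proof (cases "a \<le> y")
  case True
  have "integral {m..a} f + integral {a..y} f = integral {m..y} f"
    by (rule Henstock_Kurzweil_Integration.integral_combine) (use m True in \<open>auto intro: integrable_continuous_interval continuous_on_subset[OF f subset_UNIV]\<close>)
  then show ?thesis using True by (simp add: oint_def)
next
  case False
  have "integral {m..y} f + integral {y..a} f = integral {m..a} f"
    by (rule Henstock_Kurzweil_Integration.integral_combine) (use m False in \<open>auto intro: integrable_continuous_interval continuous_on_subset[OF f subset_UNIV]\<close>)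
  then show ?thesis using False by (simp add: oint_def)
qed

lemma oint_deriv:
  assumes f: "continuous_on UNIV f"
  shows "((\<lambda>y. oint a y f) has_real_derivative f y) (at y)"
proof -
  define m where "m = min a y - 1"
  have my: "m < y" "m \<le> a" unfolding m_def by linarith+
  have d: "((\<lambda>t. integral {m..t} f) has_real_derivative f y) (at y within {m..y+1})"
    by (rule integral_has_real_derivative) (use my in \<open>auto intro: continuous_on_subset[OF f subset_UNIV]\<close>)
  have i: "y \<in> interior {m..y+1}" unfolding interior_atLeastAtMost_real using my by simp
  from d have "((\<lambda>t. integral {m..t} f) has_real_derivative f y) (at y)"
    unfolding at_within_interior[OF i] .
  then have "((\<lambda>t. integral {m..t} f - integral {m..a} f) has_real_derivative f y - 0) (at y)"
    by (intro derivative_intros)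
  then have "((\<lambda>t. integral {m..t} f - integral {m..a} f) has_real_derivative f y) (at y)" by simp
  then show ?thesis
  proof (rule has_field_derivative_transform_within_open[where S="{m<..}"])
    fix t assume "t \<in> {m<..}"
    then show "integral {m..t} f - integral {m..a} f = oint a t f"
      using oint_eq[OF f, of m a t] my by simp
  qed (use my in auto)
qed
definition xf :: "real \<Rightarrow> real \<Rightarrow> real \<Rightarrow> real" where "xf B H s = sqrt (QQ B H s) / H"
definition xpf :: "real \<Rightarrow> real \<Rightarrow> real \<Rightarrow> real" where "xpf B H s = B * sin(H * s) / sqrt (QQ B H s)"
definition zpf :: "real \<Rightarrow> real \<Rightarrow> real \<Rightarrow> real" where "zpf B H s = (1 - B * cos(H * s)) / sqrt (QQ B H s)"
definition xppf :: "real \<Rightarrow> real \<Rightarrow> real \<Rightarrow> real" where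
  "xppf B H s = B * H * (B * cos(H * s) - 1) * (B - cos(H * s))/(QQ B H s * sqrt (QQ B H s))"
definition zppf :: "real \<Rightarrow> real \<Rightarrow> real \<Rightarrow> real" where
  "zppf B H s = B^2 * H * sin(H * s) * (B - cos(H * s))/(QQ B H s * sqrt (QQ B H s))"
definition ff :: "real \<Rightarrow> real \<Rightarrow> real \<Rightarrow> real" where
  "ff B H t = (1 + B * sin (H * t)) / sqrt (1 + B\<^sup>2 + 2 * B * sin (H * t))"
definition zf :: "real \<Rightarrow> real \<Rightarrow> real \<Rightarrow> real" where
  "zf B H s = oint (3 * pi / (2 * H)) (s + 3 * pi / (2 * H)) (ff B H)"

context
  fixes B H :: real
  assumes B: "B > 1" and H: "H > 0"
begin

lemma QQ_even: "QQ B H (- s) = QQ B H s" by (simp add: QQ_def)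
lemma xf_even: "xf B H (- s) = xf B H s" by (simp add: xf_def QQ_even)
lemma xpf_odd: "xpf B H (- s) = - xpf B H s" by (simp add: xpf_def QQ_even)
lemma zpf_even: "zpf B H (- s) = zpf B H s" by (simp add: zpf_def QQ_even)
lemma xppf_even: "xppf B H (- s) = xppf B H s" by (simp add: xppf_def QQ_even)

lemma xf_D: "(xf B H has_real_derivative xpf B H s) (at s)"
  unfolding xf_def[abs_def] xpf_def by (rule x_deriv[OF B H])
lemma xpf_D: "(xpf B H has_real_derivative xppf B H s) (at s)"
  unfolding xpf_def[abs_def] xppf_def by (rule xp_deriv[OF B H])
lemma zpf_D: "(zpf B H has_real_derivative zppf B H s) (at s)"
  unfolding zpf_def[abs_def] zppf_def by (rule zp_deriv[OF B H])

lemma ff_cont: "continuous_on UNIV (ff B H)"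
proof -
  have "1 + B\<^sup>2 + 2 * B * sin (H * t) > 0" for t
  proof -
    have "sin (H * t) \<ge> -1" by simp
    then have "1 + sin (H * t) \<ge> 0" by linarith
    then have "B * (1 + sin (H * t)) \<ge> 0" using B by (auto intro!: mult_nonneg_nonneg)
    then have "1 + B\<^sup>2 + 2 * B * sin (H * t) \<ge> (B - 1)^2" using B by (simp add: power2_eq_square algebra_simps)
    then show ?thesis using B by (smt (verit) zero_less_power)
  qed
  then show ?thesis unfolding ff_def[abs_def] by (intro continuous_intros) (simp add: less_imp_neq[symmetric])
qed

lemma ff_shift: "ff B H (s + 3 * pi / (2 * H)) = zpf B H s"
proof -
  have "H * (s + 3 * pi / (2 * H)) = H * s + 3 * pi / 2" using H by (simp add: field_simps)
  then show ?thesis by (simp add: ff_def zpf_def QQ_def sin_shift)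
qed

lemma zf_D: "(zf B H has_real_derivative zpf B H s) (at s)"
proof -
  have "((\<lambda>s. oint (3 * pi / (2 * H)) (s + 3 * pi / (2 * H)) (ff B H)) has_real_derivative ff B H (s + 3 * pi / (2 * H)) * 1) (at s)"
    by (rule DERIV_chain2[OF oint_deriv[OF ff_cont]]) (auto intro!: derivative_eq_intros)
  then show ?thesis unfolding zf_def[abs_def] by (simp add: ff_shift)
qed

lemma zf_0: "zf B H 0 = 0" by (simp add: zf_def oint_def)

lemma zf_odd: "zf B H (- s) = - zf B H s"
proof -
  have "\<forall>u. ((\<lambda>u. zf B H (- u) + zf B H u) has_real_derivative 0) (at u)"
  proof
    fix u
    have "((\<lambda>u. zf B H (- u)) has_real_derivative zpf B H (- u) * (- 1)) (at u)"
      by (rule DERIV_chain2[OF zf_D]) (auto intro!: derivative_eq_intros)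
    then have "((\<lambda>u. zf B H (- u) + zf B H u) has_real_derivative zpf B H (- u) * (- 1) + zpf B H u) (at u)"
      by (intro DERIV_add zf_D)
    then show "((\<lambda>u. zf B H (- u) + zf B H u) has_real_derivative 0) (at u)" by (simp add: zpf_even)
  qed
  from DERIV_isconst_all[OF this, of s 0] show ?thesis by (simp add: zf_0)
qed

lemma QQ_le: "QQ B H s \<le> (B + 1)^2"
proof -
  have "cos (H * s) \<ge> -1" by simp
  then have "1 + cos (H * s) \<ge> 0" by linarith
    then have "B * (1 + cos (H * s)) \<ge> 0" using B by (auto intro!: mult_nonneg_nonneg)
  then show ?thesis unfolding QQ_def using B by (simp add: power2_eq_square algebra_simps)
qed

lemma xf_pos: "xf B H s > 0" using QQ_pos[OF B] H by (simp add: xf_def)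
lemma xf_le: "xf B H s \<le> (B + 1) / H"
  using QQ_le H B real_sqrt_le_mono[OF QQ_le[of s]] by (simp add: xf_def divide_right_mono)

lemma unit: "(xpf B H s)^2 + (zpf B H s)^2 = 1"
proof -
  have q: "QQ B H s > 0" using QQ_pos[OF B] by blast
  have "(B * sin (H * s))^2 + (1 - B * cos (H * s))^2 = QQ B H s"
    unfolding QQ_def using sin_cos_squared_add[of "H * s"] by algebra
  moreover have "(xpf B H s)^2 + (zpf B H s)^2 = ((B * sin (H * s))^2 + (1 - B * cos (H * s))^2) / (sqrt (QQ B H s))^2"
    unfolding xpf_def zpf_def power_divide by (rule add_divide_distrib[symmetric])
  ultimately show ?thesis using q by simp
qed

lemma zpf_0: "zpf B H 0 = -1"
proof -
  have "QQ B H 0 = (B - 1)^2" by (simp add: QQ_def power2_eq_square algebra_simps)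
  moreover have "(1 - B) / (B - 1) = -1" using B by (simp add: field_simps)
  ultimately show ?thesis using B by (simp add: zpf_def)
qed

lemma xpf_0: "xpf B H 0 = 0" by (simp add: xpf_def)

lemma zpf_neg_iff: "zpf B H s < 0 \<longleftrightarrow> B * cos (H * s) > 1"
  using QQ_pos[OF B, of H s] by (simp add: zpf_def divide_less_0_iff)

lemma zpf_zero_iff: "zpf B H s = 0 \<longleftrightarrow> B * cos (H * s) = 1"
  using QQ_pos[OF B, of H s] by (simp add: zpf_def)

lemma xppf_pos: "B * cos (H * s) > 1 \<Longrightarrow> xppf B H s > 0"
proof -
  assume c: "B * cos (H * s) > 1"
  have "cos (H * s) \<le> 1" by simp
  then have "B - cos (H * s) > 0" using B by linarith
  then show ?thesis using c B H QQ_pos[OF B, of H s] by (simp add: xppf_def)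
qed

lemma xppf_nonneg: "B * cos (H * s) \<ge> 1 \<Longrightarrow> xppf B H s \<ge> 0"
proof -
  assume c: "B * cos (H * s) \<ge> 1"
  have "cos (H * s) \<le> 1" by simp
  then have "B - cos (H * s) > 0" using B by linarith
  then show ?thesis using c B H QQ_pos[OF B, of H s] by (simp add: xppf_def)
qed

lemma mean_id: "(- zpf B H s * xppf B H s + xpf B H s * zppf B H s) + zpf B H s / xf B H s = H"
proof -
  have q: "QQ B H s > 0" using QQ_pos[OF B] by blast
  define r where "r = sqrt (QQ B H s)"
  have r: "r > 0" "r^2 = QQ B H s" using q by (auto simp: r_def)
  define c where "c = cos (H * s)"
  define sn where "sn = sin (H * s)"
  have sc: "sn^2 + c^2 = 1" by (simp add: c_def sn_def)
  have Q: "r^2 = 1 + B^2 - 2 * B * c" using r by (simp add: QQ_def c_def)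
  have e: "zpf B H s = (1 - B * c) / r" "xpf B H s = B * sn / r" "xf B H s = r / H"
     "xppf B H s = B * H * (B * c - 1) * (B - c) / (r^2 * r)"
     "zppf B H s = B^2 * H * sn * (B - c) / (r^2 * r)"
    using q by (simp_all add: zpf_def xpf_def xf_def xppf_def zppf_def r_def c_def sn_def)
  have "(- zpf B H s * xppf B H s + xpf B H s * zppf B H s) + zpf B H s / xf B H s
      = (- (1 - B * c) * (B * H * (B * c - 1) * (B - c)) + (B * sn) * (B^2 * H * sn * (B - c))) / (r^2 * r^2)
        + H * (1 - B * c) / r^2"
    unfolding e using r(1) H by (simp add: field_simps power2_eq_square)
  also have "\<dots> = H * ((B * (B - c) * ((1 - B * c)^2 + B^2 * sn^2)) / (r^2 * r^2) + (1 - B * c) / r^2)"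
    by (simp add: field_simps power2_eq_square)
  also have "(1 - B * c)^2 + B^2 * sn^2 = r^2" using sc Q by algebra
  also have "H * ((B * (B - c) * r^2) / (r^2 * r^2) + (1 - B * c) / r^2) = H * ((B * (B - c) + (1 - B * c)) / r^2)"
    using r(1) by (simp add: field_simps power2_eq_square)
  also have "B * (B - c) + (1 - B * c) = r^2" using Q by algebra
  finally show ?thesis using r q by simp
qed


lemma xf_c: "isCont (xf B H) x" by (rule DERIV_isCont[OF xf_D])
lemma xpf_c: "isCont (xpf B H) x" by (rule DERIV_isCont[OF xpf_D])
lemma zpf_c: "isCont (zpf B H) x" by (rule DERIV_isCont[OF zpf_D])
lemma zf_c: "isCont (zf B H) x" by (rule DERIV_isCont[OF zf_D])
lemma xf_con: "continuous_on S (xf B H)" by (intro continuous_at_imp_continuous_on ballI xf_c)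
lemma xpf_con: "continuous_on S (xpf B H)" by (intro continuous_at_imp_continuous_on ballI xpf_c)
lemma zpf_con: "continuous_on S (zpf B H)" by (intro continuous_at_imp_continuous_on ballI zpf_c)
lemma zf_con: "continuous_on S (zf B H)" by (intro continuous_at_imp_continuous_on ballI zf_c)


definition "XX s t = (vector [xf B H s * cos t, xf B H s * sin t, zf B H s] :: real^3)"
definition "NN s t = (vector [- zpf B H s * cos t, - zpf B H s * sin t, xpf B H s] :: real^3)"

lemma XX_s: "((\<lambda>u. XX u t) has_vector_derivative vector [xpf B H s * cos t, xpf B H s * sin t, zpf B H s]) (at s)"
  unfolding XX_def by (intro vec3_deriv DERIV_cmult_right xf_D zf_D)
lemma XX_t: "((\<lambda>u. XX s u) has_vector_derivative vector [xf B H s * (- sin t), xf B H s * cos t, 0]) (at t)"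
  unfolding XX_def by (intro vec3_deriv DERIV_cmult DERIV_sin DERIV_cos DERIV_const)
lemma dsX: "d_s XX s t = vector [xpf B H s * cos t, xpf B H s * sin t, zpf B H s]"
  unfolding d_s_def by (rule vector_derivative_at[OF XX_s])
lemma dtX: "d_t XX s t = vector [xf B H s * (- sin t), xf B H s * cos t, 0]"
  unfolding d_t_def by (rule vector_derivative_at[OF XX_t])
lemma dsX_fun: "d_s XX = (\<lambda>s t. vector [xpf B H s * cos t, xpf B H s * sin t, zpf B H s])"
  by (intro ext dsX)
lemma dtX_fun: "d_t XX = (\<lambda>s t. vector [xf B H s * (- sin t), xf B H s * cos t, 0])"
  by (intro ext dtX)
lemma dsX_s: "((\<lambda>u. d_s XX u t) has_vector_derivative vector [xppf B H s * cos t, xppf B H s * sin t, zppf B H s]) (at s)"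
  unfolding dsX_fun by (intro vec3_deriv DERIV_cmult_right xpf_D zpf_D)
lemma dsX_t: "((\<lambda>u. d_s XX s u) has_vector_derivative vector [xpf B H s * (- sin t), xpf B H s * cos t, 0]) (at t)"
  unfolding dsX_fun by (intro vec3_deriv DERIV_cmult DERIV_sin DERIV_cos DERIV_const)
lemma dtX_t: "((\<lambda>u. d_t XX s u) has_vector_derivative vector [xf B H s * (- cos t), xf B H s * (- sin t), 0]) (at t)"
  unfolding dtX_fun by (intro vec3_deriv DERIV_cmult DERIV_sin DERIV_cos DERIV_const DERIV_minus)
lemma dsdsX: "d_s (d_s XX) s t = vector [xppf B H s * cos t, xppf B H s * sin t, zppf B H s]"
  unfolding d_s_def[of "d_s XX"] by (rule vector_derivative_at[OF dsX_s])
lemma dtdsX: "d_t (d_s XX) s t = vector [xpf B H s * (- sin t), xpf B H s * cos t, 0]"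
  unfolding d_t_def[of "d_s XX"] by (rule vector_derivative_at[OF dsX_t])
lemma dtdtX: "d_t (d_t XX) s t = vector [xf B H s * (- cos t), xf B H s * (- sin t), 0]"
  unfolding d_t_def[of "d_t XX"] by (rule vector_derivative_at[OF dtX_t])

lemma fE_X: "fE XX s t = 1"
  unfolding fE_def dsX inner3 using sin_cos_squared_add[of t] unit[of s] by algebra
lemma fF_X: "fF XX s t = 0"
  unfolding fF_def dsX dtX inner3 by algebra
lemma fG_X: "fG XX s t = (xf B H s)^2"
  unfolding fG_def dtX inner3 using sin_cos_squared_add[of t] by algebra
lemma sL_X: "sL XX NN s t = - zpf B H s * xppf B H s + xpf B H s * zppf B H s"
  unfolding sL_def dsdsX NN_def inner3 using sin_cos_squared_add[of t] by algebra
lemma sM_X: "sM XX NN s t = 0"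
  unfolding sM_def dtdsX NN_def inner3 by algebra
lemma sN_X: "sN XX NN s t = xf B H s * zpf B H s"
  unfolding sN_def dtdtX NN_def inner3 using sin_cos_squared_add[of t] by algebra

lemma shape_X: "shape XX NN s t = (- zpf B H s * xppf B H s + xpf B H s * zppf B H s, 0, 0, zpf B H s / xf B H s)"
  using xf_pos[of s]
  unfolding shape_def fE_X fF_X fG_X sL_X sM_X sN_X Let_def by (simp add: power2_eq_square)

lemma mean_X: "mean_curv XX NN s t = H"
  unfolding mean_curv_def shape_X using mean_id by simp

lemma normPhi2_X: "normPhi2 XX NN s t = (H - 2 * (zpf B H s / xf B H s))^2 / 2"
proof -
  define k where "k = zpf B H s / xf B H s"
  have L: "- zpf B H s * xppf B H s + xpf B H s * zppf B H s = H - k" using mean_id[of s] by (simp add: k_def)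
  show ?thesis unfolding normPhi2_def mean_X normA2_def shape_X L k_def[symmetric]
    by (simp add: power2_eq_square algebra_simps)
qed

lemma XN: "XX s t \<bullet> NN s t = - xf B H s * zpf B H s + zf B H s * xpf B H s"
  unfolding XX_def NN_def inner3 using sin_cos_squared_add[of t] by algebra

lemma normX: "norm (XX s t) = sqrt ((xf B H s)^2 + (zf B H s)^2)"
proof -
  have "(xf B H s * cos t)^2 + (xf B H s * sin t)^2 + (zf B H s)^2 = (xf B H s)^2 + (zf B H s)^2"
    using sin_cos_squared_add[of t] by algebra
  then show ?thesis unfolding XX_def norm3 by simp
qed

lemma normN: "norm (NN s t) = 1"
proof -
  have "(- zpf B H s * cos t)^2 + (- zpf B H s * sin t)^2 + (xpf B H s)^2 = 1"
    using sin_cos_squared_add[of t] unit[of s] by algebra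
  then show ?thesis unfolding NN_def norm3 by simp
qed

lemma N_dsX: "NN s t \<bullet> d_s XX s t = 0"
  unfolding NN_def dsX inner3 using sin_cos_squared_add[of t] by algebra
lemma N_dtX: "NN s t \<bullet> d_t XX s t = 0"
  unfolding NN_def dtX inner3 by algebra

lemma diffs_X: "(\<lambda>u. XX u t) differentiable (at s) \<and> (\<lambda>u. XX s u) differentiable (at t) \<and>
        (\<lambda>u. d_s XX u t) differentiable (at s) \<and> (\<lambda>u. d_s XX s u) differentiable (at t) \<and>
        (\<lambda>u. d_t XX s u) differentiable (at t)"
  using differentiableI_vector[OF XX_s] differentiableI_vector[OF XX_t] differentiableI_vector[OF dsX_s]
    differentiableI_vector[OF dsX_t] differentiableI_vector[OF dtX_t] by blast

end

context
  fixes B H r0 :: real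
  assumes B: "B > 1" and H: "H > 0" and r0: "r0 > 0" and z0: "zpf B H r0 = 0"
    and zne: "\<And>r. 0 < r \<Longrightarrow> r < r0 \<Longrightarrow> zpf B H r \<noteq> 0"
begin

lemma zpf_neg: assumes "\<bar>s\<bar> < r0" shows "zpf B H s < 0"
proof -
  have "zpf B H \<bar>s\<bar> < 0"
  proof (cases "\<bar>s\<bar> = 0")
    case True then show ?thesis using zpf_0[OF B H] by simp
  next
    case False
    then have s: "0 < \<bar>s\<bar>" "\<bar>s\<bar> < r0" using assms by auto
    show ?thesis
    proof (rule ccontr)
      assume "\<not> zpf B H \<bar>s\<bar> < 0"
      then have "zpf B H 0 \<le> 0" "0 \<le> zpf B H \<bar>s\<bar>" using zpf_0[OF B H] by auto
      from IVT[of "zpf B H" 0 0 "\<bar>s\<bar>", OF this] s obtain t where t: "0 \<le> t" "t \<le> \<bar>s\<bar>" "zpf B H t = 0"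
        using zpf_c[OF B H] by fastforce
      then have "t \<noteq> 0" using zpf_0[OF B H] by auto
      then show False using zne[of t] t s by auto
    qed
  qed
  then show ?thesis by (cases "s \<ge> 0") (auto simp: zpf_even[OF B H, of s, symmetric])
qed

lemma cos_gt: "\<bar>s\<bar> < r0 \<Longrightarrow> B * cos (H * s) > 1"
  using zpf_neg zpf_neg_iff[OF B H] by blast

lemma xppf_pos': "\<bar>s\<bar> < r0 \<Longrightarrow> xppf B H s > 0"
  using cos_gt xppf_pos[OF B H] by blast

lemma xpf_pos: assumes "0 < s" "s \<le> r0" shows "xpf B H s > 0"
proof -
  have "xpf B H 0 < xpf B H s"
  proof (rule DERIV_pos_imp_increasing_open[OF assms(1)])
    fix x assume "0 < x" "x < s"
    then show "\<exists>y. (xpf B H has_real_derivative y) (at x) \<and> 0 < y"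
      using xpf_D[OF B H, of x] xppf_pos'[of x] assms by auto
  qed (rule xpf_con[OF B H])
  then show ?thesis using xpf_0[OF B H] by simp
qed

lemma zf_neg: assumes "0 < s" "s \<le> r0" shows "zf B H s < 0"
proof -
  have "zf B H 0 > zf B H s"
  proof (rule DERIV_neg_imp_decreasing_open[OF assms(1)])
    fix x assume "0 < x" "x < s"
    then show "\<exists>y. (zf B H has_real_derivative y) (at x) \<and> y < 0"
      using zf_D[OF B H, of x] zpf_neg[of x] assms by auto
  qed (rule zf_con[OF B H])
  then show ?thesis using zf_0[OF B H] by simp
qed


definition "gg s = xf B H s - xpf B H s / zpf B H s * zf B H s"

lemma gg_c: "\<bar>s\<bar> < r0 \<Longrightarrow> isCont gg s"
  unfolding gg_def[abs_def] using zpf_neg[of s]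
  by (intro continuous_intros xf_c[OF B H] xpf_c[OF B H] zpf_c[OF B H] zf_c[OF B H]) auto

lemma gg_0: "gg 0 > 0"
  using xf_pos[OF B H, of 0] by (simp add: gg_def xpf_0[OF B H])

lemma exists_neg: "\<exists>r1. 0 < r1 \<and> r1 < r0 \<and> gg r1 < 0"
proof -
  define c where "c = xpf B H r0 * zf B H r0"
  have c: "c < 0" unfolding c_def using xpf_pos[OF r0 order_refl] zf_neg[OF r0 order_refl]
    by (simp add: mult_pos_neg)
  define K where "K = (B + 1) / H"
  have K: "K > 0" using B H by (simp add: K_def)
  define eta where "eta = - c / (2 * K)"
  have eta: "eta > 0" using c K by (simp add: eta_def divide_neg_pos)
  have ev1: "eventually (\<lambda>s. s \<in> {0<..<r0}) (at_left r0)"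
    by (rule eventually_at_left_real[OF r0])
  have "isCont (\<lambda>s. xpf B H s * zf B H s) r0"
    by (intro continuous_intros xpf_c[OF B H] zf_c[OF B H])
  then have "((\<lambda>s. xpf B H s * zf B H s) \<longlongrightarrow> c) (at_left r0)"
    using continuous_at_imp_continuous_at_within[of r0 _ "{..<r0}"] unfolding continuous_within c_def by blast
  then have ev2: "eventually (\<lambda>s. xpf B H s * zf B H s < c / 2) (at_left r0)"
    by (rule order_tendstoD(2)) (use c in simp)
  have "((zpf B H) \<longlongrightarrow> 0) (at_left r0)"
    using continuous_at_imp_continuous_at_within[OF zpf_c[OF B H, of r0], of "{..<r0}"] z0 unfolding continuous_within by simp
  then have ev3: "eventually (\<lambda>s. - eta < zpf B H s) (at_left r0)"
    by (rule order_tendstoD(1)) (use eta in simp)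
  have "eventually (\<lambda>s. s \<in> {0<..<r0} \<and> xpf B H s * zf B H s < c / 2 \<and> - eta < zpf B H s) (at_left r0)"
    using ev1 ev2 ev3 by eventually_elim auto
  then obtain s where s: "s \<in> {0<..<r0}" "xpf B H s * zf B H s < c / 2" "- eta < zpf B H s"
    using eventually_happens'[of "at_left r0"] trivial_limit_at_left_real by blast
  have zs: "zpf B H s < 0" using zpf_neg[of s] s by auto
  have "K * (- eta) < K * zpf B H s" by (rule mult_strict_left_mono[OF s(3) K])
  moreover have "K * (- eta) = c / 2" using K by (simp add: eta_def)
  ultimately have "xpf B H s * zf B H s < K * zpf B H s" using s(2) by linarith
  then have "K < xpf B H s * zf B H s / zpf B H s" using zs by (simp add: less_divide_eq)
  moreover have "xf B H s \<le> K" unfolding K_def by (rule xf_le[OF B H])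
  ultimately have "gg s < 0" by (simp add: gg_def)
  then show ?thesis using s by auto
qed

lemma exists_rb: "\<exists>rb. 0 < rb \<and> rb < r0 \<and> gg rb = 0 \<and> (\<forall>s. 0 \<le> s \<and> s < rb \<longrightarrow> gg s > 0)"
proof -
  obtain r1 where r1: "0 < r1" "r1 < r0" "gg r1 < 0" using exists_neg by blast
  have cg: "continuous_on {0..r1} gg"
    using r1 by (intro continuous_at_imp_continuous_on ballI gg_c) auto
  define S where "S = {0..r1} \<inter> gg -` {..0}"
  have cS: "closed S" unfolding S_def by (rule continuous_closed_preimage[OF cg]) auto
  have "r1 \<in> S" using r1 by (auto simp: S_def)
  then have neS: "S \<noteq> {}" by blast
  have bS: "bdd_below S" unfolding S_def by (rule bdd_belowI[of _ 0]) auto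
  define rb where "rb = Inf S"
  have rbS: "rb \<in> S" unfolding rb_def by (rule closed_contains_Inf[OF neS bS cS])
  then have rb1: "0 \<le> rb" "rb \<le> r1" "gg rb \<le> 0" by (auto simp: S_def)
  have rb0: "rb \<noteq> 0" using rb1 gg_0 by auto
  have pos: "gg s > 0" if "0 \<le> s" "s < rb" for s
  proof (rule ccontr)
    assume "\<not> gg s > 0"
    then have "s \<in> S" using that rb1 by (auto simp: S_def)
    then have "rb \<le> s" unfolding rb_def using bS by (rule cInf_lower)
    then show False using that by simp
  qed
  have "gg rb = 0"
  proof (rule ccontr)
    assume "gg rb \<noteq> 0"
    then have "gg rb \<le> 0" "0 \<le> gg 0" using rb1 gg_0 by auto
    from IVT2[of gg rb 0 0, OF this] obtain t where t: "0 \<le> t" "t \<le> rb" "gg t = 0"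
      using rb1 r1 gg_c by fastforce
    then have "t < rb" using \<open>gg rb \<noteq> 0\<close> by (cases "t = rb") auto
    then show False using pos[of t] t by simp
  qed
  then show ?thesis using rb1 rb0 r1 pos by (intro exI[of _ rb]) auto
qed

end


lemma final_ineq:
  fixes H p k :: real
  assumes "H > 0" "p \<ge> 0" "k * p \<le> 0" "1 + k * p \<ge> 0"
  shows "(H - 2 * k)^2 / 2 * p^2 \<le> 1 / 2 * (2 + H * p)^2"
proof -
  have e: "(2 + H * p)^2 - ((H - 2 * k) * p)^2 = (2 + 2 * (k * p)) * (2 + 2 * (H * p) - 2 * (k * p))" by algebra
  have hp: "H * p \<ge> 0" using assms by simp
  have a: "0 \<le> 2 + 2 * (k * p)" using assms by linarith
  have b: "0 \<le> 2 + 2 * (H * p) - 2 * (k * p)" using assms hp by linarith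
  have "(2 + 2 * (k * p)) * (2 + 2 * (H * p) - 2 * (k * p)) \<ge> 0"
    by (rule mult_nonneg_nonneg[OF a b])
  then have "((H - 2 * k) * p)^2 \<le> (2 + H * p)^2" using e by linarith
  then show ?thesis by (simp add: power_mult_distrib)
qed

theorem proposition3p6:
  fixes B H r0 :: real and x z g :: "real \<Rightarrow> real"
    and X Nv :: "real \<Rightarrow> real \<Rightarrow> real^3"
  assumes B: "B > 1" and H: "H > 0"
    and x_def: "\<And>s. x s = (1 / H) * sqrt (1 + B\<^sup>2 + 2 * B * sin (H * s + 3 * pi / 2))"
    and z_def: "\<And>s. z s = oint (3 * pi / (2 * H)) (s + 3 * pi / (2 * H))
                   (\<lambda>t. (1 + B * sin (H * t)) / sqrt (1 + B\<^sup>2 + 2 * B * sin (H * t)))"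
    and g_def: "\<And>s. g s = x s - deriv x s / deriv z s * z s"
    and r0: "r0 > 0" "deriv z r0 = 0" "\<And>r. 0 < r \<Longrightarrow> r < r0 \<Longrightarrow> deriv z r \<noteq> 0"
    and X_def: "\<And>s t. X s t = vector [x s * cos t, x s * sin t, z s]"
    and N_def: "\<And>s t. Nv s t = vector [- deriv z s * cos t, - deriv z s * sin t, deriv x s]"
  shows "\<exists>rb. 0 < rb \<and> rb < r0 \<and> g rb = 0 \<and> g (- rb) = 0 \<and>
           (\<forall>r\<in>{- rb..rb}. g r \<ge> 0 \<and> deriv (deriv x) r > 0 \<and> deriv x r * z r \<le> 0) \<and>
           (let R0 = sqrt ((x rb)\<^sup>2 + (z rb)\<^sup>2) in
              free_boundary_CMC_in_ball X Nv (- rb) rb R0 \<and>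
              (\<forall>s\<in>{- rb..rb}. \<forall>t.
                 normPhi2 X Nv s t * (X s t \<bullet> Nv s t)\<^sup>2
                   \<le> (1 / 2) * (2 + mean_curv X Nv s t * (X s t \<bullet> Nv s t))\<^sup>2))"
proof -
  have xe: "x = xf B H"
  proof
    fix s
    have "1 + B\<^sup>2 + 2 * B * sin (H * s + 3 * pi / 2) = QQ B H s" by (simp add: QQ_def sin_shift)
    then show "x s = xf B H s" by (simp add: x_def xf_def)
  qed
  have ffe: "(\<lambda>t. (1 + B * sin (H * t)) / sqrt (1 + B\<^sup>2 + 2 * B * sin (H * t))) = ff B H"
    by (simp add: ff_def[abs_def])
  have ze: "z = zf B H" by (rule ext) (simp add: z_def zf_def ffe)
  have dx: "deriv x = xpf B H" unfolding xe by (rule ext, rule DERIV_imp_deriv[OF xf_D[OF B H]])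
  have dz: "deriv z = zpf B H" unfolding ze by (rule ext, rule DERIV_imp_deriv[OF zf_D[OF B H]])
  have ddx: "deriv (deriv x) = xppf B H" unfolding dx by (rule ext, rule DERIV_imp_deriv[OF xpf_D[OF B H]])
  have Xe: "X = XX B H" by (intro ext) (simp add: X_def XX_def[OF B H] xe ze)
  have Ne: "Nv = NN B H" by (intro ext) (simp add: N_def NN_def[OF B H] dx dz)
  have z0: "zpf B H r0 = 0" using r0(2) dz by simp
  have zne: "\<And>r. 0 < r \<Longrightarrow> r < r0 \<Longrightarrow> zpf B H r \<noteq> 0" using r0(3) dz by simp
  have ggd: "\<And>s. gg B H s = xf B H s - xpf B H s / zpf B H s * zf B H s"
    by (rule gg_def[OF B H r0(1) z0]) (use zne in auto)
  have ge: "g = gg B H"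
  proof
    fix s
    have "g s = x s - xpf B H s / zpf B H s * z s" using g_def[of s] dx dz by simp
    then show "g s = gg B H s" using ggd[of s] by (simp add: xe ze)
  qed
  obtain rb where rb: "0 < rb" "rb < r0" "gg B H rb = 0" "\<And>s. 0 \<le> s \<Longrightarrow> s < rb \<Longrightarrow> 0 < gg B H s"
    using exists_rb[OF B H r0(1) z0 zne] by blast
  have zpf_neg': "\<And>s. \<bar>s\<bar> < r0 \<Longrightarrow> zpf B H s < 0"
    by (rule zpf_neg[OF B H r0(1) z0]) (use zne in auto)
  have xppf_pos'': "\<And>s. \<bar>s\<bar> < r0 \<Longrightarrow> xppf B H s > 0"
    by (rule xppf_pos'[OF B H r0(1) z0]) (use zne in auto)
  have xpf_pos': "\<And>s. 0 < s \<Longrightarrow> s \<le> r0 \<Longrightarrow> xpf B H s > 0"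
    by (rule xpf_pos[OF B H r0(1) z0]) (use zne in auto)
  have zf_neg': "\<And>s. 0 < s \<Longrightarrow> s \<le> r0 \<Longrightarrow> zf B H s < 0"
    by (rule zf_neg[OF B H r0(1) z0]) (use zne in auto)
  have gg_even: "gg B H (- s) = gg B H s" for s
    by (simp add: ggd xf_even[OF B H] xpf_odd[OF B H] zpf_even[OF B H] zf_odd[OF B H])
  have ggnn: "gg B H s \<ge> 0" if "\<bar>s\<bar> \<le> rb" for s
  proof -
    have "gg B H \<bar>s\<bar> \<ge> 0" using rb(3) rb(4)[of "\<bar>s\<bar>"] that by (cases "\<bar>s\<bar> = rb") auto
    then show ?thesis by (cases "s \<ge> 0") (auto simp: gg_even)
  qed
  have xz_even: "xpf B H (- s) * zf B H (- s) = xpf B H s * zf B H s" for s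
    by (simp add: xpf_odd[OF B H] zf_odd[OF B H])
  have xz: "xpf B H s * zf B H s \<le> 0" if "\<bar>s\<bar> < r0" for s
  proof -
    have "xpf B H \<bar>s\<bar> * zf B H \<bar>s\<bar> \<le> 0"
    proof (cases "s = 0")
      case True then show ?thesis by (simp add: xpf_0[OF B H])
    next
      case False
      then show ?thesis using xpf_pos'[of "\<bar>s\<bar>"] zf_neg'[of "\<bar>s\<bar>"] that
        by (simp add: mult_pos_neg less_imp_le)
    qed
    then show ?thesis by (cases "s \<ge> 0") (auto simp: xz_even)
  qed
  define phi where "phi s = (xf B H s)^2 + (zf B H s)^2" for s
  have phi_even: "phi (- s) = phi s" for s by (simp add: phi_def xf_even[OF B H] zf_odd[OF B H])
  have phi_lt: "phi u < phi rb" if "0 \<le> u" "u < rb" for u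
  proof (rule DERIV_pos_imp_increasing_open[OF that(2)])
    fix y assume y: "u < y" "y < rb"
    have d: "(phi has_real_derivative 2 * xf B H y * xpf B H y + 2 * zf B H y * zpf B H y) (at y)"
      unfolding phi_def[abs_def]
      by (rule derivative_eq_intros xf_D[OF B H] zf_D[OF B H] refl)+ simp
    have "xf B H y * xpf B H y > 0" using xf_pos[OF B H, of y] xpf_pos'[of y] y that rb by auto
    moreover have "zf B H y * zpf B H y > 0" using zf_neg'[of y] zpf_neg'[of y] y that rb
      by (simp add: mult_neg_neg)
    ultimately show "\<exists>d. (phi has_real_derivative d) (at y) \<and> 0 < d" using d by (intro exI[of _ "2 * xf B H y * xpf B H y + 2 * zf B H y * zpf B H y"]) auto
  next
    show "continuous_on {u..rb} phi" unfolding phi_def[abs_def]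
      by (intro continuous_intros xf_con[OF B H] zf_con[OF B H])
  qed
  have XNe: "XX B H s t \<bullet> NN B H s t = - zpf B H s * gg B H s" if "\<bar>s\<bar> < r0" for s t
    using zpf_neg'[OF that] unfolding XN[OF B H] ggd by (simp add: field_simps)
  define R0 where "R0 = sqrt ((x rb)\<^sup>2 + (z rb)\<^sup>2)"
  have R0: "R0 = sqrt (phi rb)" by (simp add: R0_def phi_def xe ze)
  have R0pos: "R0 > 0" unfolding R0 phi_def using xf_pos[OF B H, of rb]
    by (intro real_sqrt_gt_zero add_pos_nonneg) auto
  have A: "(\<lambda>u. XX B H u t) differentiable (at s) \<and> (\<lambda>u. XX B H s u) differentiable (at t) \<and>
        (\<lambda>u. d_s (XX B H) u t) differentiable (at s) \<and> (\<lambda>u. d_s (XX B H) s u) differentiable (at t) \<and>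
        (\<lambda>u. d_t (XX B H) s u) differentiable (at t) \<and>
        fE (XX B H) s t * fG (XX B H) s t - (fF (XX B H) s t)\<^sup>2 > 0 \<and>
        norm (NN B H s t) = 1 \<and> NN B H s t \<bullet> d_s (XX B H) s t = 0 \<and> NN B H s t \<bullet> d_t (XX B H) s t = 0" for s t
    using diffs_X[OF B H, of t s] xf_pos[OF B H, of s] normN[OF B H, of s t] N_dsX[OF B H, of s t] N_dtX[OF B H, of s t]
    by (simp add: fE_X[OF B H] fF_X[OF B H] fG_X[OF B H])
  have Bi: "norm (XX B H s t) < R0" if "s \<in> {- rb<..<rb}" for s t
  proof -
    from that have "\<bar>s\<bar> < rb" by auto
    then have "phi \<bar>s\<bar> < phi rb" using phi_lt[of "\<bar>s\<bar>"] by simp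
    then have "phi s < phi rb" by (cases "s \<ge> 0") (auto simp: phi_even)
    then show "norm (XX B H s t) < R0" unfolding R0 normX[OF B H] phi_def by simp
  qed
  have Bb: "norm (XX B H s t) = R0 \<and> XX B H s t \<bullet> NN B H s t = 0" if s: "s \<in> {- rb, rb}" for s t
  proof
    from s have "phi s = phi rb" using phi_even by auto
    then show "norm (XX B H s t) = R0" unfolding R0 normX[OF B H] phi_def by simp
    have "gg B H s = 0" using s rb(3) gg_even by auto
    moreover have "\<bar>s\<bar> < r0" using s rb by auto
    ultimately show "XX B H s t \<bullet> NN B H s t = 0" using XNe by simp
  qed
  have fb: "free_boundary_CMC_in_ball X Nv (- rb) rb R0"
    unfolding free_boundary_CMC_in_ball_def Xe Ne
    apply (intro conjI)
         apply (use rb(1) in simp)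
        apply (rule R0pos)
       apply (intro ballI allI A)
      apply (intro ballI allI Bi, assumption)
     apply (intro ballI allI Bb, assumption)
    using mean_X[OF B H] by blast
  have ineq: "normPhi2 X Nv s t * (X s t \<bullet> Nv s t)\<^sup>2
                   \<le> (1 / 2) * (2 + mean_curv X Nv s t * (X s t \<bullet> Nv s t))\<^sup>2"
    if s: "s \<in> {- rb..rb}" for s t
  proof -
    have sr: "\<bar>s\<bar> < r0" "\<bar>s\<bar> \<le> rb" using s rb by auto
    define k where "k = zpf B H s / xf B H s"
    define p where "p = XX B H s t \<bullet> NN B H s t"
    have zn: "zpf B H s < 0" by (rule zpf_neg'[OF sr(1)])
    have xp: "xf B H s > 0" by (rule xf_pos[OF B H])
    have p: "p \<ge> 0" unfolding p_def XNe[OF sr(1)] using zn ggnn[OF sr(2)]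
      by (simp add: mult_nonpos_nonneg)
    have k: "k < 0" unfolding k_def using zn xp by (simp add: divide_neg_pos)
    have kp: "k * p \<le> 0" using k p by (simp add: mult_nonpos_nonneg)
    have "1 + k * p = (xpf B H s)^2 + zpf B H s * (zf B H s * xpf B H s) / xf B H s"
      unfolding k_def p_def XN[OF B H] using unit[OF B H, of s] xp by (simp add: field_simps power2_eq_square) (metis distrib_left mult.right_neutral)
    moreover have "zpf B H s * (zf B H s * xpf B H s) \<ge> 0"
      using zn xz[OF sr(1)] by (simp add: mult_nonpos_nonpos mult.commute)
    ultimately have kp1: "1 + k * p \<ge> 0" using xp by simp
    show ?thesis unfolding Xe Ne normPhi2_X[OF B H] mean_X[OF B H] k_def[symmetric] p_def[symmetric]
      by (rule final_ineq[OF H p kp kp1])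
  qed
  show ?thesis
  proof (intro exI[of _ rb] conjI)
    show "0 < rb" "rb < r0" by (rule rb(1), rule rb(2))
    show "g rb = 0" "g (- rb) = 0" using rb(3) gg_even ge by auto
    show "\<forall>r\<in>{- rb..rb}. g r \<ge> 0 \<and> deriv (deriv x) r > 0 \<and> deriv x r * z r \<le> 0"
    proof
      fix r assume r: "r \<in> {- rb..rb}"
      then have sr: "\<bar>r\<bar> < r0" "\<bar>r\<bar> \<le> rb" using rb by auto
      show "g r \<ge> 0 \<and> deriv (deriv x) r > 0 \<and> deriv x r * z r \<le> 0"
        using ggnn[OF sr(2)] xppf_pos''[OF sr(1)] xz[OF sr(1)] unfolding ge ddx by (simp add: dx ze)
    qed
    show "let R0 = sqrt ((x rb)\<^sup>2 + (z rb)\<^sup>2) in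
              free_boundary_CMC_in_ball X Nv (- rb) rb R0 \<and>
              (\<forall>s\<in>{- rb..rb}. \<forall>t.
                 normPhi2 X Nv s t * (X s t \<bullet> Nv s t)\<^sup>2
                   \<le> (1 / 2) * (2 + mean_curv X Nv s t * (X s t \<bullet> Nv s t))\<^sup>2)"
      unfolding Let_def R0_def[symmetric] using fb ineq by blast
  qed
qed

end
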